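(* In the setting of the context, for every integer $n\ge1$, every $\theta\in\{0,1\}$ and every $t\ge0$, the solution $g_n$ of the truncated problem satisfies $\int_0^n(\zeta+\zeta^{-2\beta})g_n(\zeta,t)\,d\zeta\le\mathcal{B}$, where $\mathcal{B}>0$ is a constant depending only on $g^{in}$ (one may take $\mathcal{B}=\int_0^\infty(\zeta^{-2\beta}+\zeta)g^{in}(\zeta)d\zeta$).
   Context: $\Psi:(0,\infty)^2\to[0,\infty)$ is measurable and symmetric and there are $\beta>0$, $k>0$ with $\Psi(\zeta,\eta)\le k(\zeta\eta)^{-\beta}$ on $(0,1)^2$, $\Psi(\zeta,\eta)\le k\eta\zeta^{-\beta}$ on $(0,1)\times(1,\infty)$, and $\Psi(\zeta,\eta)\le k(\zeta+\eta)$ on $(1,\infty)^2$. Let $g^{in}\ge0$ with $g^{in}\in L^1((0,\infty);(\zeta^{-2\beta}+\zeta)d\zeta)$. For an integer $n\ge1$ and $\theta\in\{0,1\}$ set $\Psi_n^\theta(\zeta,\eta):=\Psi(\zeta,\eta)\chi_{(1/n,n)}(\zeta)\chi_{(1/n,n)}(\eta)[1-\theta+\theta\chi_{(0,n)}(\zeta+\eta)]$. Let $g_n\in\mathcal{C}^1([0,\infty);L^1(0,n))$ be the unique non-negative solution of $\partial_t g_n(\zeta,t)=\frac12\int_0^\zeta\Psi(\zeta-\eta,\eta)g_n(\zeta-\eta,t)g_n(\eta,t)d\eta-\int_0^{n-\theta\zeta}\Psi_n^\theta(\zeta,\eta)g_n(\zeta,t)g_n(\eta,t)d\eta$, $(\zeta,t)\in(0,n)\times(0,\infty)$,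 with $g_n(\zeta,0)=g^{in}(\zeta)\chi_{(0,n)}(\zeta)$ (its existence and uniqueness are known since $\Psi_n^\theta$ is bounded). *)

theory Defs
  imports "HOL-Analysis.Analysis"
begin

definition trunc_kernel :: "(real \<Rightarrow> real \<Rightarrow> real) \<Rightarrow> nat \<Rightarrow> nat \<Rightarrow> real \<Rightarrow> real \<Rightarrow> real" where
  "trunc_kernel Psi n \<theta> z e =
     Psi z e * indicator {1 / real n<..<real n} z * indicator {1 / real n<..<real n} e
       * (1 - real \<theta> + real \<theta> * indicator {0<..<real n} (z + e))"

definition kernel_hyp :: "(real \<Rightarrow> real \<Rightarrow> real) \<Rightarrow> real \<Rightarrow> real \<Rightarrow> bool" where
  "kernel_hyp Psi \<beta> k \<longleftrightarrow>
     \<beta> > 0 \<and> k > 0 \<and>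
     set_borel_measurable borel ({0<..} \<times> {0<..}) (\<lambda>(z, e). Psi z e) \<and>
     (\<forall>z>0. \<forall>e>0. Psi z e \<ge> 0 \<and> Psi z e = Psi e z) \<and>
     (\<forall>z\<in>{0<..<1}. \<forall>e\<in>{0<..<1}. Psi z e \<le> k * (z * e) powr (-\<beta>)) \<and>
     (\<forall>z\<in>{0<..<1}. \<forall>e\<in>{1<..}. Psi z e \<le> k * e * z powr (-\<beta>)) \<and>
     (\<forall>z\<in>{1<..}. \<forall>e\<in>{1<..}. Psi z e \<le> k * (z + e))"

text \<open>g (zeta, t) is a non-negative solution in C^1([0,oo); L^1(0,n)) of the truncated problem.
  The time derivative is taken in L^1(0,n) (one-sided at t = 0); g' is that derivative,
  continuous in L^1; the equation holds in L^1(0,n), i.e. for a.e. zeta in (0,n), for every t > 0.\<close>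
definition trunc_solution ::
  "(real \<Rightarrow> real \<Rightarrow> real) \<Rightarrow> (real \<Rightarrow> real) \<Rightarrow> nat \<Rightarrow> nat \<Rightarrow> (real \<Rightarrow> real \<Rightarrow> real) \<Rightarrow> bool" where
  "trunc_solution Psi gin n \<theta> g \<longleftrightarrow>
     (\<forall>t\<ge>0. \<forall>z\<in>{0<..<real n}. g z t \<ge> 0) \<and>
     (\<exists>g'.
        (\<forall>t\<ge>0. set_integrable lborel {0<..<real n} (\<lambda>z. g z t)) \<and>
        (\<forall>t\<ge>0. set_integrable lborel {0<..<real n} (\<lambda>z. g' z t)) \<and>
        (\<forall>t\<ge>0. ((\<lambda>s. (LINT z:{0<..<real n}|lborel. \<bar>g z s - g z t - (s - t) * g' z t\<bar>) / \<bar>s - t\<bar>)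
                    \<longlongrightarrow> 0) (at t within {0..})) \<and>
        (\<forall>t\<ge>0. ((\<lambda>s. LINT z:{0<..<real n}|lborel. \<bar>g' z s - g' z t\<bar>) \<longlongrightarrow> 0) (at t within {0..})) \<and>
        (\<forall>t>0. AE z in lborel. z \<in> {0<..<real n} \<longrightarrow>
            g' z t = (1/2) * (LINT e:{0<..<z}|lborel. trunc_kernel Psi n \<theta> (z - e) e * g (z - e) t * g e t)
                     - (LINT e:{0<..<real n - real \<theta> * z}|lborel. trunc_kernel Psi n \<theta> z e * g z t * g e t))) \<and>
     (AE z in lborel. z \<in> {0<..<real n} \<longrightarrow> g z 0 = gin z)"

end

theory Submission
  imports Defs
begin


lemma deriv_lemma:
  fixes g g' :: "real \<Rightarrow> real \<Rightarrow> real" and h :: "real\<Rightarrow>real" and I :: "real set"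
  assumes I[measurable]: "I \<in> sets lborel"
    and hb: "\<And>z. z\<in>I \<Longrightarrow> \<bar>h z\<bar> \<le> H" and H: "0 \<le> H"
    and hm[measurable]: "h \<in> borel_measurable lborel"
    and ig: "\<forall>t\<ge>0. set_integrable lborel I (\<lambda>z. g z t)"
    and ig': "\<forall>t\<ge>0. set_integrable lborel I (\<lambda>z. g' z t)"
    and lim: "\<forall>t\<ge>0. ((\<lambda>s. (LINT z:I|lborel. \<bar>g z s - g z t - (s - t) * g' z t\<bar>) / \<bar>s - t\<bar>)
                    \<longlongrightarrow> 0) (at t within {0..})"
    and s: "s \<ge> 0"
  shows "((\<lambda>r. LINT z:I|lborel. h z * g z r) has_real_derivative (LINT z:I|lborel. h z * g' z s)) (at s within {0..})"
proof -
  have intg: "\<And>r. r \<ge> 0 \<Longrightarrow> integrable lborel (\<lambda>z. indicator I z * g z r)"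
    using ig by (auto simp: set_integrable_def)
  have intg': "\<And>r. r \<ge> 0 \<Longrightarrow> integrable lborel (\<lambda>z. indicator I z * g' z r)"
    using ig' by (auto simp: set_integrable_def)
  have mh: "\<And>f::real\<Rightarrow>real. integrable lborel (\<lambda>z. indicator I z * f z) \<Longrightarrow> integrable lborel (\<lambda>z. indicator I z * (h z * f z))"
  proof -
    fix f :: "real\<Rightarrow>real" assume f: "integrable lborel (\<lambda>z. indicator I z * f z)"
    have m: "(\<lambda>z. indicator I z * f z) \<in> borel_measurable lborel" using f by auto
    have "(\<lambda>z. indicator I z * (h z * f z)) = (\<lambda>z. h z * (indicator I z * f z))" by (auto simp: fun_eq_iff)
    moreover have "integrable lborel (\<lambda>z. h z * (indicator I z * f z))"
      apply (rule Bochner_Integration.integrable_bound[where f="\<lambda>z. H * (indicator I z * f z)"])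
      using f m apply auto
      apply (intro AE_I2 impI)
      using hb H by (simp add: abs_mult mult_right_mono indicator_def)
    ultimately show "integrable lborel (\<lambda>z. indicator I z * (h z * f z))" by simp
  qed
  define D where "D = (LINT z:I|lborel. h z * g' z s)"
  define \<Phi> where "\<Phi> = (\<lambda>r. LINT z:I|lborel. h z * g z r)"
  define E where "E = (\<lambda>r. (LINT z:I|lborel. \<bar>g z r - g z s - (r - s) * g' z s\<bar>) / \<bar>r - s\<bar>)"
  have E0: "(E \<longlongrightarrow> 0) (at s within {0..})" using lim s unfolding E_def by auto
  have key: "\<bar>(\<Phi> r - \<Phi> s) / (r - s) - D\<bar> \<le> H * E r" if r: "r \<ge> 0" "r \<noteq> s" for r
  proof -
    have eq: "\<Phi> r - \<Phi> s - (r - s) * D = (LINT z:I|lborel. h z * (g z r - g z s - (r - s) * g' z s))"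
    proof -
      have i1: "integrable lborel (\<lambda>z. indicator I z * (h z * g z r))" using mh intg r by auto
      have i2: "integrable lborel (\<lambda>z. indicator I z * (h z * g z s))" using mh intg s by auto
      have i3: "integrable lborel (\<lambda>z. (r - s) * (indicator I z * (h z * g' z s)))" using mh intg' s by auto
      have "(LINT z:I|lborel. h z * (g z r - g z s - (r - s) * g' z s)) =
          integral\<^sup>L lborel (\<lambda>z. indicator I z * (h z * g z r) - indicator I z * (h z * g z s) - (r - s) * (indicator I z * (h z * g' z s)))"
        unfolding set_lebesgue_integral_def by (intro Bochner_Integration.integral_cong) (auto simp: algebra_simps)
      also have "\<dots> = \<Phi> r - \<Phi> s - (r - s) * D"
        using i1 i2 i3 unfolding \<Phi>_def D_def set_lebesgue_integral_def
        by (simp add: Bochner_Integration.integral_diff)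
      finally show ?thesis by simp
    qed
    have "\<bar>LINT z:I|lborel. h z * (g z r - g z s - (r - s) * g' z s)\<bar> \<le> H * (LINT z:I|lborel. \<bar>g z r - g z s - (r - s) * g' z s\<bar>)"
    proof -
      define X where "X = (\<lambda>z. g z r - g z s - (r - s) * g' z s)"
      have iX: "integrable lborel (\<lambda>z. indicator I z * X z)"
      proof -
        have "integrable lborel (\<lambda>z. indicator I z * g z r - indicator I z * g z s - (r - s) * (indicator I z * g' z s))"
          using intg intg' r s by auto
        moreover have "(\<lambda>z. indicator I z * g z r - indicator I z * g z s - (r - s) * (indicator I z * g' z s)) = (\<lambda>z. indicator I z * X z)"
          unfolding X_def by (auto simp: fun_eq_iff algebra_simps)
        ultimately show ?thesis by simp
      qed
      have iaX: "integrable lborel (\<lambda>z. indicator I z * \<bar>X z\<bar>)"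
      proof -
        have "integrable lborel (\<lambda>z. \<bar>indicator I z * X z\<bar>)" using iX by auto
        moreover have "(\<lambda>z. \<bar>indicator I z * X z\<bar>) = (\<lambda>z. indicator I z * \<bar>X z\<bar>)"
          by (auto simp: fun_eq_iff indicator_def)
        ultimately show ?thesis by simp
      qed
      have "\<bar>integral\<^sup>L lborel (\<lambda>z. indicator I z * (h z * X z))\<bar> \<le> integral\<^sup>L lborel (\<lambda>z. norm (indicator I z * (h z * X z)))"
        using integral_norm_bound by (metis real_norm_def)
      also have "\<dots> \<le> integral\<^sup>L lborel (\<lambda>z. H * (indicator I z * \<bar>X z\<bar>))"
      proof (rule integral_mono)
        show "integrable lborel (\<lambda>z. norm (indicator I z * (h z * X z)))" using mh[OF iX] by auto
        show "integrable lborel (\<lambda>z. H * (indicator I z * \<bar>X z\<bar>))" using iaX by auto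
        fix z show "norm (indicator I z * (h z * X z)) \<le> H * (indicator I z * \<bar>X z\<bar>)"
          using hb[of z] H by (simp add: indicator_def abs_mult mult_right_mono)
      qed
      also have "\<dots> = H * (LINT z:I|lborel. \<bar>g z r - g z s - (r - s) * g' z s\<bar>)"
        unfolding set_lebesgue_integral_def X_def by simp
      finally show ?thesis unfolding set_lebesgue_integral_def X_def by simp
    qed
    then have "\<bar>\<Phi> r - \<Phi> s - (r - s) * D\<bar> / \<bar>r - s\<bar> \<le> H * E r"
      unfolding eq E_def using r by (simp add: divide_right_mono)
    moreover have "\<bar>(\<Phi> r - \<Phi> s) / (r - s) - D\<bar> = \<bar>\<Phi> r - \<Phi> s - (r - s) * D\<bar> / \<bar>r - s\<bar>"
    proof -
      have "(\<Phi> r - \<Phi> s) / (r - s) - D = (\<Phi> r - \<Phi> s - (r - s) * D) / (r - s)"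
        using r by (simp add: diff_divide_distrib)
      then show ?thesis by (simp add: abs_divide)
    qed
    ultimately show ?thesis by simp
  qed
  have "((\<lambda>r. (\<Phi> r - \<Phi> s) / (r - s) - D) \<longlongrightarrow> 0) (at s within {0..})"
  proof (rule Lim_null_comparison)
    show "\<forall>\<^sub>F r in at s within {0..}. norm ((\<Phi> r - \<Phi> s) / (r - s) - D) \<le> H * E r"
      using key by (auto simp: eventually_at_filter)
    show "((\<lambda>r. H * E r) \<longlongrightarrow> 0) (at s within {0..})"
      using tendsto_mult_right_zero[OF E0] by simp
  qed
  then have "((\<lambda>r. (\<Phi> r - \<Phi> s) / (r - s)) \<longlongrightarrow> D) (at s within {0..})"
    by (rule LIM_zero_cancel)
  then show ?thesis unfolding has_field_derivative_iff \<Phi>_def D_def .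
qed

lemma decr_lemma:
  fixes \<Phi> D :: "real \<Rightarrow> real"
  assumes d: "\<And>s. s \<ge> 0 \<Longrightarrow> (\<Phi> has_real_derivative D s) (at s within {0..})"
    and n: "\<And>s. s > 0 \<Longrightarrow> D s \<le> 0" and t: "t \<ge> 0"
  shows "\<Phi> t \<le> \<Phi> 0"
proof (cases "t = 0")
  case True then show ?thesis by simp
next
  case False
  then have tp: "0 < t" using t by simp
  have at: "\<And>x::real. 0 < x \<Longrightarrow> at x within {0..} = at x"
    by (rule at_within_interior) auto
  have c: "continuous_on {0..t} \<Phi>"
    unfolding continuous_on_eq_continuous_within
  proof
    fix x assume "x \<in> {0..t}"
    then have "continuous (at x within {0..}) \<Phi>" using d[THEN DERIV_continuous] by auto
    then show "continuous (at x within {0..t}) \<Phi>" by (rule continuous_within_subset) auto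
  qed
  have dd: "\<And>x. 0 < x \<Longrightarrow> (\<Phi> has_real_derivative D x) (at x)"
    using d at by (metis less_imp_le)
  obtain l z where z: "0 < z" "z < t" "DERIV \<Phi> z :> l" "\<Phi> t - \<Phi> 0 = (t - 0) * l"
    using MVT[OF tp c] dd real_differentiable_def by blast
  have "l = D z" using DERIV_unique[OF z(3) dd[OF z(1)]] .
  then have "l \<le> 0" using n z(1) by simp
  then show ?thesis using z(4) tp mult_nonneg_nonpos[of t l] by simp
qed



context
  fixes Kt :: "real \<Rightarrow> real \<Rightarrow> real" and gs h :: "real \<Rightarrow> real" and N th C Hb :: real
  assumes Km[measurable]: "case_prod Kt \<in> borel_measurable borel"
  and Kpos: "\<And>x y. 0 \<le> Kt x y"
  and Ksym: "\<And>x y. Kt x y = Kt y x"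
  and Ksupp: "\<And>x y. Kt x y \<noteq> 0 \<Longrightarrow> x \<in> {0<..<N} \<and> y \<in> {0<..<N}"
  and Kb: "\<And>x y. x \<noteq> 1 \<Longrightarrow> y \<noteq> 1 \<Longrightarrow> Kt x y \<le> C"
  and gm[measurable]: "gs \<in> borel_measurable borel"
  and gpos: "\<And>x. 0 \<le> gs x"
  and gi: "integrable lborel gs"
  and hm[measurable]: "h \<in> borel_measurable borel"
  and hpos: "\<And>x. 0 \<le> h x"
  and hb: "\<And>x. x \<in> {0<..<N} \<Longrightarrow> h x \<le> Hb"
  and hsub: "\<And>x y. 0<x \<Longrightarrow> 0<y \<Longrightarrow> h (x+y) \<le> h x + h y"
  and th: "th = 0 \<or> th = 1"
begin

lemma Kt_comp[measurable]:
  assumes [measurable]: "f \<in> borel_measurable M" "g \<in> borel_measurable M"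
  shows "(\<lambda>x. Kt (f x) (g x)) \<in> borel_measurable M"
proof -
  have "(\<lambda>x. (f x, g x)) \<in> measurable M (borel \<Otimes>\<^sub>M borel)" by measurable
  then have "(\<lambda>x. (f x, g x)) \<in> measurable M borel" by (simp add: borel_prod)
  from measurable_compose[OF this Km] show ?thesis by simp
qed

lemma fst_lb[measurable]: "(fst :: real \<times> real \<Rightarrow> real) \<in> borel_measurable (lborel \<Otimes>\<^sub>M lborel)"
  using measurable_fst[of lborel lborel] by simp
lemma snd_lb[measurable]: "(snd :: real \<times> real \<Rightarrow> real) \<in> borel_measurable (lborel \<Otimes>\<^sub>M lborel)"
  using measurable_snd[of lborel lborel] by simp

lemma prod_meas: "f \<in> borel_measurable borel \<Longrightarrow> f \<in> borel_measurable (lborel \<Otimes>\<^sub>M lborel)"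
  by (simp add: lborel_prod)

lemma C_nonneg_or: "0 \<le> C \<or> (\<forall>x y. x \<noteq> 1 \<longrightarrow> y \<noteq> 1 \<longrightarrow> Kt x y = 0)"
  using Kb Kpos by (meson order.trans not_le antisym)

lemma loss_int:
  assumes z: "z \<noteq> 1" and A[measurable]: "A \<in> sets borel"
  shows "integrable lborel (\<lambda>e. indicator A e * (Kt z e * gs z * gs e))"
proof (rule Bochner_Integration.integrable_bound[where f="\<lambda>e. \<bar>C\<bar> * gs z * gs e"])
  show "integrable lborel (\<lambda>e. \<bar>C\<bar> * gs z * gs e)" using gi by auto
  show "(\<lambda>e. indicator A e * (Kt z e * gs z * gs e)) \<in> borel_measurable lborel" by simp
  have "AE e in lborel. e \<noteq> 1" by (rule AE_lborel_singleton)
  then show "AE e in lborel. norm (indicator A e * (Kt z e * gs z * gs e)) \<le> norm (\<bar>C\<bar> * gs z * gs e)"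
  proof eventually_elim
    case (elim e)
    have "Kt z e \<le> \<bar>C\<bar>" using Kb[OF z elim] by simp
    then have "Kt z e * (gs z * gs e) \<le> \<bar>C\<bar> * (gs z * gs e)"
      using gpos by (simp add: mult_right_mono)
    then show ?case using gpos Kpos[of z e]
      by (simp add: indicator_def abs_mult mult.assoc)
  qed
qed

lemma loss_eq:
  assumes z: "z \<noteq> 1" and A[measurable]: "A \<in> sets borel"
  shows "ennreal (integral\<^sup>L lborel (\<lambda>e. indicator A e * (Kt z e * gs z * gs e)))
     = (\<integral>\<^sup>+e. ennreal (indicator A e * (Kt z e * gs z * gs e)) \<partial>lborel)"
  by (rule nn_integral_eq_integral[symmetric]) (use loss_int[OF z A] gpos Kpos in \<open>auto simp: indicator_def\<close>)


lemma G_fin: "(\<integral>\<^sup>+e. ennreal (gs e) \<partial>lborel) < \<infinity>"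
proof -
  have "(\<integral>\<^sup>+e. ennreal (gs e) \<partial>lborel) = ennreal (integral\<^sup>L lborel gs)"
    by (rule nn_integral_eq_integral) (use gi gpos in auto)
  then show ?thesis by simp
qed

lemma double_fin:
  assumes c: "0 \<le> c"
  shows "(\<integral>\<^sup>+z. \<integral>\<^sup>+e. ennreal (c * gs z * gs e) \<partial>lborel \<partial>lborel) < \<infinity>"
proof -
  define G where "G = (\<integral>\<^sup>+e. ennreal (gs e) \<partial>lborel)"
  have "\<And>z. (\<integral>\<^sup>+e. ennreal (c * gs z * gs e) \<partial>lborel) = ennreal (c * gs z) * G"
    unfolding G_def using c gpos by (subst nn_integral_cmult[symmetric]) (auto simp: ennreal_mult)
  then have "(\<integral>\<^sup>+z. \<integral>\<^sup>+e. ennreal (c * gs z * gs e) \<partial>lborel \<partial>lborel) = (\<integral>\<^sup>+z. ennreal c * ennreal (gs z) * G \<partial>lborel)"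
    using c gpos by (simp add: ennreal_mult)
  also have "\<dots> = ennreal c * G * G"
    unfolding G_def by (subst nn_integral_multc) (auto simp: nn_integral_cmult)
  finally show ?thesis using G_fin unfolding G_def[symmetric]
    by (simp add: ennreal_mult_less_top)
qed

lemma ennreal_integral_le:
  fixes f :: "real \<Rightarrow> real"
  assumes "f \<in> borel_measurable lborel" "\<And>x. 0 \<le> f x"
  shows "ennreal (integral\<^sup>L lborel f) \<le> (\<integral>\<^sup>+x. ennreal (f x) \<partial>lborel)"
proof (cases "integrable lborel f")
  case True
  then show ?thesis using assms by (subst nn_integral_eq_integral) auto
next
  case False
  then show ?thesis by (simp add: not_integrable_integral_eq)
qed


lemma L_le: "h z * (indicator {0<..<N} z * indicator {0<..<N - th*z} e) \<le> \<bar>Hb\<bar>"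
  using hb[of z] hpos[of z] by (auto simp: indicator_def)

lemma loss_fin:
  "(\<integral>\<^sup>+z. \<integral>\<^sup>+e. ennreal (h z * (indicator {0<..<N} z * indicator {0<..<N - th*z} e) * (Kt z e * gs z * gs e)) \<partial>lborel \<partial>lborel) < \<infinity>"
proof -
  have "(\<integral>\<^sup>+z. \<integral>\<^sup>+e. ennreal (h z * (indicator {0<..<N} z * indicator {0<..<N - th*z} e) * (Kt z e * gs z * gs e)) \<partial>lborel \<partial>lborel)
     \<le> (\<integral>\<^sup>+z. \<integral>\<^sup>+e. ennreal ((\<bar>Hb\<bar> * \<bar>C\<bar>) * gs z * gs e) \<partial>lborel \<partial>lborel)"
  proof (rule nn_integral_mono_AE)
    show "AE z in lborel. (\<integral>\<^sup>+e. ennreal (h z * (indicator {0<..<N} z * indicator {0<..<N - th*z} e) * (Kt z e * gs z * gs e)) \<partial>lborel)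
       \<le> (\<integral>\<^sup>+e. ennreal ((\<bar>Hb\<bar> * \<bar>C\<bar>) * gs z * gs e) \<partial>lborel)"
      using AE_lborel_singleton[of 1]
    proof eventually_elim
      case (elim z)
      show ?case
      proof (rule nn_integral_mono_AE)
        show "AE e in lborel. ennreal (h z * (indicator {0<..<N} z * indicator {0<..<N - th*z} e) * (Kt z e * gs z * gs e))
           \<le> ennreal ((\<bar>Hb\<bar> * \<bar>C\<bar>) * gs z * gs e)"
          using AE_lborel_singleton[of 1]
        proof eventually_elim
          case (elim e)
          have k: "Kt z e \<le> \<bar>C\<bar>" using Kb[of z e] elim \<open>z \<noteq> 1\<close> by simp
          have a: "0 \<le> h z * (indicator {0<..<N} z * indicator {0<..<N - th*z} e)"
            using hpos[of z] by simp
          have "h z * (indicator {0<..<N} z * indicator {0<..<N - th*z} e) * Kt z e \<le> \<bar>Hb\<bar> * \<bar>C\<bar>"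
            using mult_mono[OF L_le k abs_ge_zero Kpos] by simp
          then have "h z * (indicator {0<..<N} z * indicator {0<..<N - th*z} e) * Kt z e * (gs z * gs e) \<le> \<bar>Hb\<bar> * \<bar>C\<bar> * (gs z * gs e)"
            using gpos by (simp add: mult_right_mono)
          then show ?case by (intro ennreal_leI) (simp add: mult.assoc)
        qed
      qed
    qed
  qed
  also have "\<dots> < \<infinity>" by (rule double_fin) simp
  finally show ?thesis .
qed


lemma LF_sym: "indicator {0<..<N} e * indicator {0<..<N - th*e} z * (Kt e z * gs e * gs z)
   = indicator {0<..<N} z * indicator {0<..<N - th*z} e * (Kt z e * gs z * gs e)"
proof (cases "Kt z e = 0")
  case True then show ?thesis using Ksym[of z e] by simp
next
  case False
  then have "z \<in> {0<..<N} \<and> e \<in> {0<..<N}" using Ksupp by blast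
  then show ?thesis using th Ksym[of z e] by (auto simp: indicator_def)
qed

lemma meas2: "(\<lambda>(z, e). ennreal (h z * (indicator {0<..<N} z * indicator {0<..<N - th*z} e) * (Kt z e * gs z * gs e))) \<in> borel_measurable (lborel \<Otimes>\<^sub>M lborel)"
  unfolding indicator_def greaterThanLessThan_iff by measurable

lemma loss_sym:
  "(\<integral>\<^sup>+z. \<integral>\<^sup>+e. ennreal (h z * (indicator {0<..<N} z * indicator {0<..<N - th*z} e) * (Kt z e * gs z * gs e)) \<partial>lborel \<partial>lborel)
 = (\<integral>\<^sup>+z. \<integral>\<^sup>+e. ennreal (h e * (indicator {0<..<N} z * indicator {0<..<N - th*z} e) * (Kt z e * gs z * gs e)) \<partial>lborel \<partial>lborel)"
proof -
  have "(\<integral>\<^sup>+z. \<integral>\<^sup>+e. ennreal (h z * (indicator {0<..<N} z * indicator {0<..<N - th*z} e) * (Kt z e * gs z * gs e)) \<partial>lborel \<partial>lborel)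
    = (\<integral>\<^sup>+e. \<integral>\<^sup>+z. ennreal (h z * (indicator {0<..<N} z * indicator {0<..<N - th*z} e) * (Kt z e * gs z * gs e)) \<partial>lborel \<partial>lborel)"
    using lborel_pair.Fubini'[OF meas2] by simp
  also have "\<dots> = (\<integral>\<^sup>+z. \<integral>\<^sup>+e. ennreal (h e * (indicator {0<..<N} z * indicator {0<..<N - th*z} e) * (Kt z e * gs z * gs e)) \<partial>lborel \<partial>lborel)"
  proof (intro nn_integral_cong)
    fix z e
    show "ennreal (h e * (indicator {0<..<N} e * indicator {0<..<N - th*e} z) * (Kt e z * gs e * gs z)) =
          ennreal (h e * (indicator {0<..<N} z * indicator {0<..<N - th*z} e) * (Kt z e * gs z * gs e))"
      using LF_sym[of e z] by (metis mult.assoc)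
  qed
  finally show ?thesis .
qed


lemma gain_pt:
  "indicator {0<..<N} (e + x) * h (e + x) * indicator {0<..<e + x} e * (Kt (e + x - e) e * gs (e + x - e) * gs e)
   \<le> (h x + h e) * (indicator {0<..<N} x * indicator {0<..<N - th*x} e) * (Kt x e * gs x * gs e)"
proof (cases "Kt x e = 0")
  case True then show ?thesis by simp
next
  case False
  then have xe: "x \<in> {0<..<N}" "e \<in> {0<..<N}" using Ksupp by blast+
  have F0: "0 \<le> Kt x e * gs x * gs e" using Kpos gpos by simp
  show ?thesis
  proof (cases "e + x < N")
    case True
    have L1: "indicator {0<..<N} x * indicator {0<..<N - th*x} e = (1::real)"
      using xe True th by (auto simp: indicator_def)
    have "h (e + x) \<le> h x + h e" using hsub[of e x] xe by simp
    then show ?thesis using xe True L1 F0 by (simp add: indicator_def mult_right_mono)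
  next
    case False
    then show ?thesis using F0 hpos[of x] hpos[of e] by (simp add: indicator_def)
  qed
qed

lemma measG: "(\<lambda>(z, e). ennreal (indicator {0<..<N} z * h z * indicator {0<..<z} e * (Kt (z - e) e * gs (z - e) * gs e))) \<in> borel_measurable (lborel \<Otimes>\<^sub>M lborel)"
  unfolding indicator_def greaterThanLessThan_iff by measurable

lemma measR: "(\<lambda>(x, e). ennreal ((h x + h e) * (indicator {0<..<N} x * indicator {0<..<N - th*x} e) * (Kt x e * gs x * gs e))) \<in> borel_measurable (lborel \<Otimes>\<^sub>M lborel)"
  unfolding indicator_def greaterThanLessThan_iff by measurable

lemma gain_le:
  "(\<integral>\<^sup>+z. \<integral>\<^sup>+e. ennreal (indicator {0<..<N} z * h z * indicator {0<..<z} e * (Kt (z - e) e * gs (z - e) * gs e)) \<partial>lborel \<partial>lborel)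
   \<le> (\<integral>\<^sup>+x. \<integral>\<^sup>+e. ennreal ((h x + h e) * (indicator {0<..<N} x * indicator {0<..<N - th*x} e) * (Kt x e * gs x * gs e)) \<partial>lborel \<partial>lborel)"
proof -
  have "(\<integral>\<^sup>+z. \<integral>\<^sup>+e. ennreal (indicator {0<..<N} z * h z * indicator {0<..<z} e * (Kt (z - e) e * gs (z - e) * gs e)) \<partial>lborel \<partial>lborel)
    = (\<integral>\<^sup>+e. \<integral>\<^sup>+z. ennreal (indicator {0<..<N} z * h z * indicator {0<..<z} e * (Kt (z - e) e * gs (z - e) * gs e)) \<partial>lborel \<partial>lborel)"
    using lborel_pair.Fubini'[OF measG] by simp
  also have "\<dots> = (\<integral>\<^sup>+e. \<integral>\<^sup>+x. ennreal (indicator {0<..<N} (e + x) * h (e + x) * indicator {0<..<e + x} e * (Kt (e + x - e) e * gs (e + x - e) * gs e)) \<partial>lborel \<partial>lborel)"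
  proof (rule nn_integral_cong)
    fix e
    have m: "(\<lambda>z. ennreal (indicator {0<..<N} z * h z * indicator {0<..<z} e * (Kt (z - e) e * gs (z - e) * gs e))) \<in> borel_measurable borel"
      unfolding indicator_def greaterThanLessThan_iff by measurable
    show "(\<integral>\<^sup>+z. ennreal (indicator {0<..<N} z * h z * indicator {0<..<z} e * (Kt (z - e) e * gs (z - e) * gs e)) \<partial>lborel)
       = (\<integral>\<^sup>+x. ennreal (indicator {0<..<N} (e + x) * h (e + x) * indicator {0<..<e + x} e * (Kt (e + x - e) e * gs (e + x - e) * gs e)) \<partial>lborel)"
      using nn_integral_real_affine[OF m, of 1 e] by simp
  qed
  also have "\<dots> \<le> (\<integral>\<^sup>+e. \<integral>\<^sup>+x. ennreal ((h x + h e) * (indicator {0<..<N} x * indicator {0<..<N - th*x} e) * (Kt x e * gs x * gs e)) \<partial>lborel \<partial>lborel)"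
    by (intro nn_integral_mono ennreal_leI gain_pt)
  also have "\<dots> = (\<integral>\<^sup>+x. \<integral>\<^sup>+e. ennreal ((h x + h e) * (indicator {0<..<N} x * indicator {0<..<N - th*x} e) * (Kt x e * gs x * gs e)) \<partial>lborel \<partial>lborel)"
    using lborel_pair.Fubini'[OF measR] by simp
  finally show ?thesis .
qed


lemma sign_lemma:
  fixes g :: "real \<Rightarrow> real"
  assumes geq: "\<And>a b. Kt a b * g a * g b = Kt a b * gs a * gs b"
  shows "integral\<^sup>L lborel (\<lambda>z. indicator {0<..<N} z * (h z * ((1/2) * (LINT e:{0<..<z}|lborel. Kt (z - e) e * g (z - e) * g e)
          - (LINT e:{0<..<N - th * z}|lborel. Kt z e * g z * g e)))) \<le> 0"
    and "(\<lambda>z. indicator {0<..<N} z * (h z * ((1/2) * (LINT e:{0<..<z}|lborel. Kt (z - e) e * g (z - e) * g e)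
          - (LINT e:{0<..<N - th * z}|lborel. Kt z e * g z * g e)))) \<in> borel_measurable lborel"
proof -
  define F where "F = (\<lambda>z e. Kt z e * gs z * gs e)"
  define L where "L = (\<lambda>z e. indicator {0<..<N} z * indicator {0<..<N - th*z} e :: real)"
  define Gain where "Gain = (\<lambda>z. integral\<^sup>L lborel (\<lambda>e. indicator {0<..<z} e * (Kt (z - e) e * gs (z - e) * gs e)))"
  define Loss where "Loss = (\<lambda>z. integral\<^sup>L lborel (\<lambda>e. indicator {0<..<N - th * z} e * (Kt z e * gs z * gs e)))"
  define P where "P = (\<lambda>z. indicator {0<..<N} z * (h z * ((1/2) * Gain z)))"
  define Q where "Q = (\<lambda>z. indicator {0<..<N} z * (h z * Loss z))"
  have eqPQ: "(\<lambda>z. indicator {0<..<N} z * (h z * ((1/2) * (LINT e:{0<..<z}|lborel. Kt (z - e) e * g (z - e) * g e)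
          - (LINT e:{0<..<N - th * z}|lborel. Kt z e * g z * g e)))) = (\<lambda>z. P z - Q z)"
  proof -
    have g1: "\<And>z. (LINT e:{0<..<z}|lborel. Kt (z - e) e * g (z - e) * g e) = Gain z"
      unfolding set_lebesgue_integral_def Gain_def by (simp add: geq)
    have g2: "\<And>z. (LINT e:{0<..<N - th * z}|lborel. Kt z e * g z * g e) = Loss z"
      unfolding set_lebesgue_integral_def Loss_def by (simp add: geq)
    show ?thesis unfolding g1 g2 P_def Q_def by (auto simp: fun_eq_iff algebra_simps)
  qed
  have Fpos: "\<And>z e. 0 \<le> F z e" unfolding F_def using Kpos gpos by simp
  have mGain: "Gain \<in> borel_measurable lborel"
  proof -
    have "(\<lambda>(z, e). indicator {0<..<z} e * (Kt (z - e) e * gs (z - e) * gs e)) \<in> borel_measurable (lborel \<Otimes>\<^sub>M lborel)"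
      unfolding indicator_def greaterThanLessThan_iff by measurable
    then show ?thesis unfolding Gain_def by (rule lborel.borel_measurable_lebesgue_integral)
  qed
  have mLoss: "Loss \<in> borel_measurable lborel"
  proof -
    have "(\<lambda>(z, e). indicator {0<..<N - th * z} e * (Kt z e * gs z * gs e)) \<in> borel_measurable (lborel \<Otimes>\<^sub>M lborel)"
      unfolding indicator_def greaterThanLessThan_iff by measurable
    then show ?thesis unfolding Loss_def by (rule lborel.borel_measurable_lebesgue_integral)
  qed
  have Gpos: "\<And>z. 0 \<le> Gain z" unfolding Gain_def
    by (rule Bochner_Integration.integral_nonneg) (use Kpos gpos in auto)
  have Lpos: "\<And>z. 0 \<le> Loss z" unfolding Loss_def
    by (rule Bochner_Integration.integral_nonneg) (use Kpos gpos in auto)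
  have Ppos: "\<And>z. 0 \<le> P z" unfolding P_def using Gpos hpos by simp
  have Qpos: "\<And>z. 0 \<le> Q z" unfolding Q_def using Lpos hpos by simp
  have mP: "P \<in> borel_measurable lborel" unfolding P_def using mGain by measurable
  have mQ: "Q \<in> borel_measurable lborel" unfolding Q_def using mLoss by measurable
  define LossNN where "LossNN = (\<integral>\<^sup>+z. \<integral>\<^sup>+e. ennreal (h z * (indicator {0<..<N} z * indicator {0<..<N - th*z} e) * (Kt z e * gs z * gs e)) \<partial>lborel \<partial>lborel)"
  have Qnn: "(\<integral>\<^sup>+z. ennreal (Q z) \<partial>lborel) = LossNN"
    unfolding LossNN_def
  proof (rule nn_integral_cong_AE)
    show "AE z in lborel. ennreal (Q z) = (\<integral>\<^sup>+e. ennreal (h z * (indicator {0<..<N} z * indicator {0<..<N - th*z} e) * (Kt z e * gs z * gs e)) \<partial>lborel)"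
      using AE_lborel_singleton[of 1]
    proof eventually_elim
      case (elim z)
      have "ennreal (Q z) = ennreal (indicator {0<..<N} z * h z) * ennreal (Loss z)"
        unfolding Q_def using hpos[of z] Lpos[of z] by (simp add: ennreal_mult mult.assoc)
      also have "\<dots> = ennreal (indicator {0<..<N} z * h z) * (\<integral>\<^sup>+e. ennreal (indicator {0<..<N - th * z} e * (Kt z e * gs z * gs e)) \<partial>lborel)"
        unfolding Loss_def using loss_eq[OF elim, of "{0<..<N - th * z}"] by simp
      also have "\<dots> = (\<integral>\<^sup>+e. ennreal (indicator {0<..<N} z * h z) * ennreal (indicator {0<..<N - th * z} e * (Kt z e * gs z * gs e)) \<partial>lborel)"
        by (rule nn_integral_cmult[symmetric]) (unfold indicator_def greaterThanLessThan_iff, measurable)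
      also have "\<dots> = (\<integral>\<^sup>+e. ennreal (h z * (indicator {0<..<N} z * indicator {0<..<N - th*z} e) * (Kt z e * gs z * gs e)) \<partial>lborel)"
        by (rule nn_integral_cong) (use hpos[of z] Kpos[of z] gpos in \<open>simp add: ennreal_mult[symmetric] mult_ac\<close>)
      finally show ?case .
    qed
  qed
  have Lfin: "LossNN < \<infinity>" unfolding LossNN_def by (rule loss_fin)
  define GainNN where "GainNN = (\<integral>\<^sup>+z. \<integral>\<^sup>+e. ennreal (indicator {0<..<N} z * h z * indicator {0<..<z} e * (Kt (z - e) e * gs (z - e) * gs e)) \<partial>lborel \<partial>lborel)"
  have Pnn: "(\<integral>\<^sup>+z. ennreal (P z) \<partial>lborel) \<le> ennreal (1/2) * GainNN"
  proof -
    have "(\<integral>\<^sup>+z. ennreal (P z) \<partial>lborel) \<le> (\<integral>\<^sup>+z. ennreal (1/2) * (\<integral>\<^sup>+e. ennreal (indicator {0<..<N} z * h z * indicator {0<..<z} e * (Kt (z - e) e * gs (z - e) * gs e)) \<partial>lborel) \<partial>lborel)"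
    proof (rule nn_integral_mono)
      fix z
      have m: "(\<lambda>e. indicator {0<..<z} e * (Kt (z - e) e * gs (z - e) * gs e)) \<in> borel_measurable lborel"
        unfolding indicator_def greaterThanLessThan_iff by measurable
      have "ennreal (P z) = ennreal (1/2) * ennreal (indicator {0<..<N} z * h z) * ennreal (Gain z)"
      proof -
        have p: "P z = (1/2) * (indicator {0<..<N} z * h z) * Gain z" unfolding P_def by (simp add: mult_ac)
        have e1: "ennreal ((1/2) * (indicator {0<..<N} z * h z) * Gain z) = ennreal ((1/2) * (indicator {0<..<N} z * h z)) * ennreal (Gain z)"
          by (rule ennreal_mult) (use hpos[of z] Gpos[of z] in simp_all)
        have e2: "ennreal ((1/2) * (indicator {0<..<N} z * h z)) = ennreal (1/2) * ennreal (indicator {0<..<N} z * h z)"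
          by (rule ennreal_mult) (use hpos[of z] in simp_all)
        show ?thesis unfolding p e1 e2 ..
      qed
      also have "\<dots> \<le> ennreal (1/2) * ennreal (indicator {0<..<N} z * h z) * (\<integral>\<^sup>+e. ennreal (indicator {0<..<z} e * (Kt (z - e) e * gs (z - e) * gs e)) \<partial>lborel)"
        unfolding Gain_def
        by (intro mult_left_mono ennreal_integral_le m) (use Kpos gpos in auto)
      also have "\<dots> = ennreal (1/2) * (\<integral>\<^sup>+e. ennreal (indicator {0<..<N} z * h z) * ennreal (indicator {0<..<z} e * (Kt (z - e) e * gs (z - e) * gs e)) \<partial>lborel)"
        using m by (simp add: nn_integral_cmult mult.assoc)
      also have "\<dots> = ennreal (1/2) * (\<integral>\<^sup>+e. ennreal (indicator {0<..<N} z * h z * indicator {0<..<z} e * (Kt (z - e) e * gs (z - e) * gs e)) \<partial>lborel)"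
        by (intro arg_cong2[where f="(*)"] refl nn_integral_cong) (use hpos[of z] Kpos gpos in \<open>simp add: ennreal_mult[symmetric] mult_ac\<close>)
      finally show "ennreal (P z) \<le> \<dots>" .
    qed
    also have "\<dots> = ennreal (1/2) * GainNN"
      unfolding GainNN_def
      by (rule nn_integral_cmult) (use measG in \<open>measurable\<close>)
    finally show ?thesis .
  qed
  have GL: "GainNN \<le> LossNN + LossNN"
  proof -
    have "GainNN \<le> (\<integral>\<^sup>+x. \<integral>\<^sup>+e. ennreal ((h x + h e) * (indicator {0<..<N} x * indicator {0<..<N - th*x} e) * (Kt x e * gs x * gs e)) \<partial>lborel \<partial>lborel)"
      unfolding GainNN_def by (rule gain_le)
    also have "\<dots> = (\<integral>\<^sup>+x. (\<integral>\<^sup>+e. ennreal (h x * (indicator {0<..<N} x * indicator {0<..<N - th*x} e) * (Kt x e * gs x * gs e)) \<partial>lborel)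
          + (\<integral>\<^sup>+e. ennreal (h e * (indicator {0<..<N} x * indicator {0<..<N - th*x} e) * (Kt x e * gs x * gs e)) \<partial>lborel) \<partial>lborel)"
    proof (rule nn_integral_cong)
      fix x
      show "(\<integral>\<^sup>+e. ennreal ((h x + h e) * (indicator {0<..<N} x * indicator {0<..<N - th*x} e) * (Kt x e * gs x * gs e)) \<partial>lborel)
        = (\<integral>\<^sup>+e. ennreal (h x * (indicator {0<..<N} x * indicator {0<..<N - th*x} e) * (Kt x e * gs x * gs e)) \<partial>lborel)
          + (\<integral>\<^sup>+e. ennreal (h e * (indicator {0<..<N} x * indicator {0<..<N - th*x} e) * (Kt x e * gs x * gs e)) \<partial>lborel)"
        apply (subst nn_integral_add[symmetric])
        apply (unfold indicator_def greaterThanLessThan_iff; measurable)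
        apply (unfold indicator_def greaterThanLessThan_iff; measurable)
        apply (rule nn_integral_cong)
        using hpos[of x] hpos Kpos[of x] gpos
        by (simp add: ennreal_plus[symmetric] distrib_right del: ennreal_plus)
    qed
    also have "\<dots> = LossNN + (\<integral>\<^sup>+z. \<integral>\<^sup>+e. ennreal (h e * (indicator {0<..<N} z * indicator {0<..<N - th*z} e) * (Kt z e * gs z * gs e)) \<partial>lborel \<partial>lborel)"
      unfolding LossNN_def
      by (rule nn_integral_add) (unfold indicator_def greaterThanLessThan_iff; measurable)+
    also have "\<dots> = LossNN + LossNN" using loss_sym unfolding LossNN_def by simp
    finally show ?thesis .
  qed
  have half: "ennreal (1/2) * (LossNN + LossNN) = LossNN"
  proof -
    have "LossNN + LossNN = ennreal 2 * LossNN" by (simp add: mult_2)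
    then have "ennreal (1/2) * (LossNN + LossNN) = (ennreal (1/2) * ennreal 2) * LossNN" by (simp add: mult.assoc)
    also have "ennreal (1/2) * ennreal 2 = 1" by (subst ennreal_mult[symmetric]) simp_all
    finally show ?thesis by simp
  qed
  have PQ: "(\<integral>\<^sup>+z. ennreal (P z) \<partial>lborel) \<le> (\<integral>\<^sup>+z. ennreal (Q z) \<partial>lborel)"
  proof -
    have "(\<integral>\<^sup>+z. ennreal (P z) \<partial>lborel) \<le> ennreal (1/2) * (LossNN + LossNN)"
      using Pnn GL by (meson order.trans mult_left_mono zero_le)
    then show ?thesis using half Qnn by simp
  qed
  have iQ: "integrable lborel Q"
    by (rule integrableI_nonneg) (use mQ Qpos Qnn Lfin in auto)
  have iP: "integrable lborel P"
    by (rule integrableI_nonneg) (use mP Ppos PQ Qnn Lfin in auto)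
  have "ennreal (integral\<^sup>L lborel P) \<le> ennreal (integral\<^sup>L lborel Q)"
    using PQ iP iQ Ppos Qpos by (simp add: nn_integral_eq_integral)
  then have "integral\<^sup>L lborel P \<le> integral\<^sup>L lborel Q"
    using Qpos by (simp add: ennreal_le_iff Bochner_Integration.integral_nonneg)
  then show "integral\<^sup>L lborel (\<lambda>z. indicator {0<..<N} z * (h z * ((1/2) * (LINT e:{0<..<z}|lborel. Kt (z - e) e * g (z - e) * g e)
          - (LINT e:{0<..<N - th * z}|lborel. Kt z e * g z * g e)))) \<le> 0"
    unfolding eqPQ using iP iQ by (simp add: Bochner_Integration.integral_diff)
  show "(\<lambda>z. indicator {0<..<N} z * (h z * ((1/2) * (LINT e:{0<..<z}|lborel. Kt (z - e) e * g (z - e) * g e)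
          - (LINT e:{0<..<N - th * z}|lborel. Kt z e * g z * g e)))) \<in> borel_measurable lborel"
    unfolding eqPQ using mP mQ by measurable
qed

lemma sign_lemma2:
  fixes g f :: "real \<Rightarrow> real"
  assumes geq: "\<And>a b. Kt a b * g a * g b = Kt a b * gs a * gs b"
    and fm: "(\<lambda>z. indicator {0<..<N} z * (h z * f z)) \<in> borel_measurable lborel"
    and ae: "AE z in lborel. z \<in> {0<..<N} \<longrightarrow> f z = (1/2) * (LINT e:{0<..<z}|lborel. Kt (z - e) e * g (z - e) * g e)
          - (LINT e:{0<..<N - th * z}|lborel. Kt z e * g z * g e)"
  shows "integral\<^sup>L lborel (\<lambda>z. indicator {0<..<N} z * (h z * f z)) \<le> 0"
proof -
  have "integral\<^sup>L lborel (\<lambda>z. indicator {0<..<N} z * (h z * f z)) = integral\<^sup>L lborel (\<lambda>z. indicator {0<..<N} z * (h z * ((1/2) * (LINT e:{0<..<z}|lborel. Kt (z - e) e * g (z - e) * g e)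
          - (LINT e:{0<..<N - th * z}|lborel. Kt z e * g z * g e))))"
    by (rule integral_cong_AE[OF fm sign_lemma(2)[OF geq]]) (use ae in \<open>auto simp: indicator_def\<close>)
  then show ?thesis using sign_lemma(1)[OF geq] by simp
qed

end


theorem lemma4p2:
  fixes Psi :: "real \<Rightarrow> real \<Rightarrow> real" and \<beta> k :: real and gin :: "real \<Rightarrow> real"
    and n \<theta> :: nat and g :: "real \<Rightarrow> real \<Rightarrow> real" and t :: real
  assumes "kernel_hyp Psi \<beta> k"
    and "gin \<in> borel_measurable lborel"
    and "\<forall>z>0. gin z \<ge> 0"
    and "set_integrable lborel {0<..} (\<lambda>z. (z powr (-2 * \<beta>) + z) * gin z)"
    and "n \<ge> 1" and "\<theta> \<in> {0, 1}"
    and "trunc_solution Psi gin n \<theta> g"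
    and "t \<ge> 0"
  shows "(\<integral>\<^sup>+ z\<in>{0<..<real n}. ennreal ((z + z powr (-2 * \<beta>)) * g z t) \<partial>lborel)
           \<le> ennreal (LINT z:{0<..}|lborel. (z powr (-2 * \<beta>) + z) * gin z)"
proof -
  note kh = assms(1)[unfolded kernel_hyp_def]
  have bpos: "\<beta> > 0" and kpos: "k > 0" using kh by auto
  have Psim: "set_borel_measurable borel ({0<..} \<times> {0<..}) (\<lambda>(z, e). Psi z e)" using kh by blast
  have Psipos: "\<And>z e. z > 0 \<Longrightarrow> e > 0 \<Longrightarrow> Psi z e \<ge> 0" using kh by blast
  have Psisym: "\<And>z e. z > 0 \<Longrightarrow> e > 0 \<Longrightarrow> Psi z e = Psi e z" using kh by blast
  have B1: "\<And>z e. z \<in> {0<..<1} \<Longrightarrow> e \<in> {0<..<1} \<Longrightarrow> Psi z e \<le> k * (z * e) powr (-\<beta>)" using kh by blast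
  have B2: "\<And>z e. z \<in> {0<..<1} \<Longrightarrow> e \<in> {1<..} \<Longrightarrow> Psi z e \<le> k * e * z powr (-\<beta>)" using kh by blast
  have B3: "\<And>z e. z \<in> {1<..} \<Longrightarrow> e \<in> {1<..} \<Longrightarrow> Psi z e \<le> k * (z + e)" using kh by blast
  note ts = assms(7)[unfolded trunc_solution_def]
  have gpos0: "\<And>s z. s \<ge> 0 \<Longrightarrow> z \<in> {0<..<real n} \<Longrightarrow> g z s \<ge> 0" using ts by blast
  have gin0: "AE z in lborel. z \<in> {0<..<real n} \<longrightarrow> g z 0 = gin z" using ts by blast
  obtain g' where
    ig: "\<forall>t\<ge>0. set_integrable lborel {0<..<real n} (\<lambda>z. g z t)" and
    ig': "\<forall>t\<ge>0. set_integrable lborel {0<..<real n} (\<lambda>z. g' z t)" and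
    lim: "\<forall>t\<ge>0. ((\<lambda>s. (LINT z:{0<..<real n}|lborel. \<bar>g z s - g z t - (s - t) * g' z t\<bar>) / \<bar>s - t\<bar>)
                    \<longlongrightarrow> 0) (at t within {0..})" and
    eq: "\<forall>t>0. AE z in lborel. z \<in> {0<..<real n} \<longrightarrow>
            g' z t = (1/2) * (LINT e:{0<..<z}|lborel. trunc_kernel Psi n \<theta> (z - e) e * g (z - e) t * g e t)
                     - (LINT e:{0<..<real n - real \<theta> * z}|lborel. trunc_kernel Psi n \<theta> z e * g z t * g e t)"
    using ts by blast
  define N where "N = real n"
  define th where "th = real \<theta>"
  define Kt where "Kt = trunc_kernel Psi n \<theta>"
  define A where "A = {1 / N<..<N}"
  have N1: "N \<ge> 1" using assms(5) unfolding N_def by simp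
  have iN: "0 < 1 / N" using N1 by simp
  have th01: "th = 0 \<or> th = 1" using assms(6) unfolding th_def by auto
  have Kt_eq: "\<And>z e. Kt z e = Psi z e * indicator A z * indicator A e * (1 - th + th * indicator {0<..<N} (z + e))"
    unfolding Kt_def trunc_kernel_def A_def N_def th_def by simp
  have fac: "\<And>z e. 0 \<le> 1 - th + th * indicator {0<..<N} (z + e) \<and> 1 - th + th * indicator {0<..<N} (z + e) \<le> (1::real)"
    using th01 by (auto simp: indicator_def)
  have Apos: "\<And>z. z \<in> A \<Longrightarrow> z > 0" unfolding A_def using iN by (meson greaterThanLessThan_iff less_trans)
  have Kpos: "\<And>z e. 0 \<le> Kt z e"
  proof -
    fix z e show "0 \<le> Kt z e"
      unfolding Kt_eq using fac[of z e] Psipos[of z e] Apos[of z] Apos[of e] by (auto simp: indicator_def)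
  qed
  have Ksym: "\<And>z e. Kt z e = Kt e z"
  proof -
    fix z e show "Kt z e = Kt e z"
      unfolding Kt_eq using Psisym[of z e] Apos[of z] Apos[of e] by (auto simp: indicator_def add.commute)
  qed
  have Ksupp: "\<And>z e. Kt z e \<noteq> 0 \<Longrightarrow> z \<in> {0<..<N} \<and> e \<in> {0<..<N}"
  proof -
    fix z e assume "Kt z e \<noteq> 0"
    then have "z \<in> A" "e \<in> A" unfolding Kt_eq by (auto simp: indicator_def split: if_splits)
    then show "z \<in> {0<..<N} \<and> e \<in> {0<..<N}" using Apos \<open>z \<in> A\<close> \<open>e \<in> A\<close> unfolding A_def by auto
  qed
  define C where "C = k * ((1/N) * (1/N)) powr (-\<beta>) + k * N * (1/N) powr (-\<beta>) + 2 * k * N"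
  have C1: "k * ((1/N) * (1/N)) powr (-\<beta>) \<le> C" and C2: "k * N * (1/N) powr (-\<beta>) \<le> C"
    and C3: "2 * k * N \<le> C" and C0: "0 \<le> C"
    unfolding C_def using kpos N1 by auto
  have Kb: "\<And>z e. z \<noteq> 1 \<Longrightarrow> e \<noteq> 1 \<Longrightarrow> Kt z e \<le> C"
  proof -
    fix z e :: real assume z1: "z \<noteq> 1" and e1: "e \<noteq> 1"
    show "Kt z e \<le> C"
    proof (cases "z \<in> A \<and> e \<in> A")
      case False
      then show ?thesis unfolding Kt_eq using C0 by (auto simp: indicator_def)
    next
      case True
      then have zA: "1/N < z" "z < N" and eA: "1/N < e" "e < N" unfolding A_def by auto
      have zp: "0 < z" and ep: "0 < e" using zA eA iN by linarith+
      have "Kt z e = Psi z e * (1 - th + th * indicator {0<..<N} (z + e))"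
        unfolding Kt_eq using True by simp
      also have "\<dots> \<le> Psi z e" using fac[of z e] Psipos[OF zp ep] by (simp add: mult_left_le)
      also have "\<dots> \<le> C"
      proof (cases "z < 1")
        case zl: True
        show ?thesis
        proof (cases "e < 1")
          case el: True
          have "(1/N) * (1/N) \<le> z * e" using zA eA iN zp ep by (intro mult_mono) auto
          then have "(z * e) powr (-\<beta>) \<le> ((1/N) * (1/N)) powr (-\<beta>)"
            using bpos iN by (intro powr_mono2') auto
          then have "Psi z e \<le> k * ((1/N) * (1/N)) powr (-\<beta>)"
            using B1[of z e] zl el zp ep kpos by (smt (verit) greaterThanLessThan_iff mult_left_mono)
          then show ?thesis using C1 by simp
        next
          case False
          then have el: "e > 1" using e1 by simp
          have "z powr (-\<beta>) \<le> (1/N) powr (-\<beta>)" using bpos iN zA by (intro powr_mono2') auto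
          moreover have "e \<le> N" using eA by simp
          ultimately have "k * e * z powr (-\<beta>) \<le> k * N * (1/N) powr (-\<beta>)"
            using kpos ep by (intro mult_mono) auto
          then show ?thesis using B2[of z e] zl el zp C2 by simp
        qed
      next
        case False
        then have zl: "z > 1" using z1 by simp
        show ?thesis
        proof (cases "e < 1")
          case el: True
          have "e powr (-\<beta>) \<le> (1/N) powr (-\<beta>)" using bpos iN eA by (intro powr_mono2') auto
          moreover have "z \<le> N" using zA by simp
          ultimately have "k * z * e powr (-\<beta>) \<le> k * N * (1/N) powr (-\<beta>)"
            using kpos zp by (intro mult_mono) auto
          then show ?thesis using B2[of e z] Psisym[OF zp ep] zl el ep C2 by simp
        next
          case False
          then have el: "e > 1" using e1 by simp
          have "k * (z + e) \<le> 2 * k * N" using zA eA kpos by simp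
          then show ?thesis using B3[of z e] zl el C3 by simp
        qed
      qed
      finally show ?thesis .
    qed
  qed
  have Km: "case_prod Kt \<in> borel_measurable borel"
  proof -
    define S where "S = ({0<..} \<times> {0<..} :: (real \<times> real) set)"
    define P where "P = (\<lambda>p. indicator S p *\<^sub>R (case p of (z, e) \<Rightarrow> Psi z e))"
    have Pm[measurable]: "P \<in> borel_measurable (borel \<Otimes>\<^sub>M borel)"
      unfolding borel_prod P_def using Psim unfolding set_borel_measurable_def S_def .
    have pt: "\<And>p. case_prod Kt p = P p * indicator A (fst p) * indicator A (snd p)
        * (1 - th + th * indicator {0<..<N} (fst p + snd p))"
    proof -
      fix p :: "real \<times> real"
      obtain z e where p: "p = (z, e)" by (cases p)
      show "case_prod Kt p = P p * indicator A (fst p) * indicator A (snd p)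
        * (1 - th + th * indicator {0<..<N} (fst p + snd p))"
      proof (cases "z \<in> A \<and> e \<in> A")
        case True
        then have "(z, e) \<in> S" unfolding S_def using Apos by auto
        then show ?thesis unfolding Kt_eq p P_def by simp
      next
        case False
        then show ?thesis unfolding Kt_eq p by (auto simp: indicator_def)
      qed
    qed
    have "(\<lambda>p. P p * indicator A (fst p) * indicator A (snd p)
        * (1 - th + th * indicator {0<..<N} (fst p + snd p))) \<in> borel_measurable (borel \<Otimes>\<^sub>M borel)"
    proof -
      have f1: "(\<lambda>p. indicator A (fst p) :: real) \<in> borel_measurable (borel \<Otimes>\<^sub>M borel)"
        by (rule measurable_compose[OF measurable_fst borel_measurable_indicator]) (simp add: A_def)
      have f2: "(\<lambda>p. indicator A (snd p) :: real) \<in> borel_measurable (borel \<Otimes>\<^sub>M borel)"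
        by (rule measurable_compose[OF measurable_snd borel_measurable_indicator]) (simp add: A_def)
      have s1: "(\<lambda>p. fst p + snd p :: real) \<in> borel_measurable (borel \<Otimes>\<^sub>M borel)"
        using borel_measurable_add[OF measurable_fst measurable_snd] by simp
      have f3: "(\<lambda>p. indicator {0<..<N} (fst p + snd p) :: real) \<in> borel_measurable (borel \<Otimes>\<^sub>M borel)"
        by (rule measurable_compose[OF s1 borel_measurable_indicator]) simp
      have c: "(\<lambda>p. 1 - th + th * indicator {0<..<N} (fst p + snd p) :: real) \<in> borel_measurable (borel \<Otimes>\<^sub>M borel)"
        using borel_measurable_add[OF borel_measurable_const[of "1 - th"] borel_measurable_times[OF borel_measurable_const[of th] f3]]
        by (simp add: algebra_simps)
      show ?thesis using borel_measurable_times[OF borel_measurable_times[OF borel_measurable_times[OF Pm f1] f2] c] .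
    qed
    then have "case_prod Kt \<in> borel_measurable (borel \<Otimes>\<^sub>M borel)"
      by (subst measurable_cong[OF pt]) 
    then show ?thesis unfolding borel_prod .
  qed
  note ig = ig[folded N_def] and ig' = ig'[folded N_def] and lim = lim[folded N_def]
  note eq = eq[folded N_def Kt_def th_def]
  note gpos0 = gpos0[folded N_def] and gin0 = gin0[folded N_def]
  define gs where "gs = (\<lambda>s z. indicator {0<..<N} z * g z s)"
  have gsi: "\<And>s. s \<ge> 0 \<Longrightarrow> integrable lborel (gs s)"
  proof -
    fix s :: real assume "s \<ge> 0"
    then have "set_integrable lborel {0<..<N} (\<lambda>z. g z s)" using ig by blast
    then show "integrable lborel (gs s)" unfolding set_integrable_def gs_def by simp
  qed
  have gsm: "\<And>s. s \<ge> 0 \<Longrightarrow> gs s \<in> borel_measurable borel"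
  proof -
    fix s :: real assume "s \<ge> 0"
    show "gs s \<in> borel_measurable borel"
      using borel_measurable_integrable[OF gsi[OF \<open>s \<ge> 0\<close>]] by (simp only: measurable_lborel2)
  qed
  have gspos: "\<And>s z. s \<ge> 0 \<Longrightarrow> 0 \<le> gs s z"
  proof -
    fix s z :: real assume "s \<ge> 0"
    show "0 \<le> gs s z"
    proof (cases "z \<in> {0<..<N}")
      case True then show ?thesis using gpos0[OF \<open>s \<ge> 0\<close> True] unfolding gs_def by simp
    qed (simp add: gs_def)
  qed
  have geq: "\<And>s a b. Kt a b * g a s * g b s = Kt a b * gs s a * gs s b"
  proof -
    fix s a b show "Kt a b * g a s * g b s = Kt a b * gs s a * gs s b"
    proof (cases "Kt a b = 0")
      case True then show ?thesis by simp
    next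
      case False then have "a \<in> {0<..<N}" "b \<in> {0<..<N}" using Ksupp by blast+
      then show ?thesis unfolding gs_def by simp
    qed
  qed
  define hM where "hM = (\<lambda>(M::nat) z. min (\<bar>z\<bar> powr (-2*\<beta>)) (real M) + \<bar>z\<bar>)"
  have hm: "\<And>M. hM M \<in> borel_measurable borel" unfolding hM_def by measurable
  have hpos: "\<And>M z. 0 \<le> hM M z" unfolding hM_def by simp
  have hb: "\<And>M z. z \<in> {0<..<N} \<Longrightarrow> hM M z \<le> real M + N" unfolding hM_def by auto
  have hsub: "\<And>M x y. 0 < x \<Longrightarrow> 0 < y \<Longrightarrow> hM M (x + y) \<le> hM M x + hM M y"
  proof -
    fix M :: nat and x y :: real assume x: "0 < x" and y: "0 < y"
    have ax: "\<bar>x\<bar> = x" "\<bar>y\<bar> = y" "\<bar>x + y\<bar> = x + y" using x y by auto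
    have "(x + y) powr (-2*\<beta>) \<le> x powr (-2*\<beta>)" using bpos x y by (intro powr_mono2') auto
    then have a: "min ((x + y) powr (-2*\<beta>)) (real M) \<le> min (x powr (-2*\<beta>)) (real M)"
      by (rule min.mono) simp
    have b: "0 \<le> min (y powr (-2*\<beta>)) (real M)" by simp
    show "hM M (x + y) \<le> hM M x + hM M y" unfolding hM_def ax using a b by linarith
  qed
  define \<Phi> where "\<Phi> = (\<lambda>M r. LINT z:{0<..<N}|lborel. hM M z * g z r)"
  have decr: "\<And>M. \<Phi> M t \<le> \<Phi> M 0"
  proof -
    fix M
    show "\<Phi> M t \<le> \<Phi> M 0"
    proof (rule decr_lemma[where D="\<lambda>s. LINT z:{0<..<N}|lborel. hM M z * g' z s"])
      show "0 \<le> t" by (rule assms(8))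
      fix s :: real
      assume "0 \<le> s"
      show "(\<Phi> M has_real_derivative (LINT z:{0<..<N}|lborel. hM M z * g' z s)) (at s within {0..})"
      proof -
        have hbA: "\<And>z. z \<in> {0<..<N} \<Longrightarrow> \<bar>hM M z\<bar> \<le> real M + N" using hb hpos by (metis abs_of_nonneg)
        have H0: "0 \<le> real M + N" using N1 of_nat_0_le_iff[of M] by linarith
        have hml: "hM M \<in> borel_measurable lborel" using hm[of M] by (simp only: measurable_lborel2)
        have Is: "{0<..<N} \<in> sets lborel" unfolding sets_lborel by (rule borel_open[OF open_greaterThanLessThan])
        show ?thesis unfolding \<Phi>_def by (rule deriv_lemma[where H="real M + N", OF Is hbA H0 hml ig ig' lim \<open>0 \<le> s\<close>])
      qed
    next
      fix s :: real assume sp: "0 < s"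
      have s0: "0 \<le> s" using sp by simp
      have fm: "(\<lambda>z. indicator {0<..<N} z * (hM M z * g' z s)) \<in> borel_measurable lborel"
      proof -
        have "integrable lborel (\<lambda>z. indicator {0<..<N} z *\<^sub>R g' z s)"
          using ig' s0 unfolding set_integrable_def by blast
        then have m1: "(\<lambda>z. indicator {0<..<N} z * g' z s) \<in> borel_measurable lborel"
          by (rule borel_measurable_integrable[THEN measurable_cong[THEN iffD1, rotated]]) simp
        have m2: "hM M \<in> borel_measurable lborel" using hm[of M] by (simp only: measurable_lborel2)
        have "(\<lambda>z. hM M z * (indicator {0<..<N} z * g' z s)) \<in> borel_measurable lborel"
          by (rule borel_measurable_times[OF m2 m1])
        then show ?thesis by (rule measurable_cong[THEN iffD1, rotated]) (simp only: mult.left_commute)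
      qed
      have ae: "AE z in lborel. z \<in> {0<..<N} \<longrightarrow> g' z s = (1/2) * (LINT e:{0<..<z}|lborel. Kt (z - e) e * g (z - e) s * g e s)
          - (LINT e:{0<..<N - th * z}|lborel. Kt z e * g z s * g e s)"
        using eq sp by blast
      have "integral\<^sup>L lborel (\<lambda>z. indicator {0<..<N} z * (hM M z * g' z s)) \<le> 0"
        by (rule sign_lemma2[where Kt=Kt and gs="gs s" and h="hM M" and N=N and th=th and C=C and Hb="real M + N"
              and g="\<lambda>z. g z s" and f="\<lambda>z. g' z s", OF Km Kpos Ksym Ksupp Kb gsm[OF s0] gspos[OF s0] gsi[OF s0]
              hm[where M=M] hpos[where M=M] hb[where M=M] hsub[where M=M] th01 geq fm ae])
      then show "(LINT z:{0<..<N}|lborel. hM M z * g' z s) \<le> 0"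
        unfolding set_lebesgue_integral_def by simp
    qed
  qed
  define R where "R = (LINT z:{0<..}|lborel. (z powr (-2 * \<beta>) + z) * gin z)"
  have Is: "{0<..<N} \<in> sets lborel" unfolding sets_lborel by (rule borel_open[OF open_greaterThanLessThan])
  have ginm: "gin \<in> borel_measurable lborel" by (rule assms(2))
  have iR: "integrable lborel (\<lambda>z. indicator {0<..} z * ((z powr (-2 * \<beta>) + z) * gin z))"
    using assms(4) unfolding set_integrable_def by simp
  have hle: "\<And>M z. z \<in> {0<..<N} \<Longrightarrow> hM M z \<le> z powr (-2 * \<beta>) + z"
  proof -
    fix M z assume z: "z \<in> {0<..<N}"
    then have "\<bar>z\<bar> = z" by simp
    moreover have "min (z powr (-2 * \<beta>)) (real M) \<le> z powr (-2 * \<beta>)" by (rule min.cobounded1)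
    ultimately show "hM M z \<le> z powr (-2 * \<beta>) + z" unfolding hM_def by linarith
  qed
  have ini: "\<And>M. \<Phi> M 0 \<le> R"
  proof -
    fix M
    have m2: "hM M \<in> borel_measurable lborel" using hm[of M] by (simp only: measurable_lborel2)
    have m1: "(\<lambda>z. indicator {0<..<N} z * g z 0) \<in> borel_measurable lborel"
      using gsm[of 0] unfolding gs_def by (simp only: measurable_lborel2 order_refl)
    have ma: "(\<lambda>z. indicator {0<..<N} z * (hM M z * g z 0)) \<in> borel_measurable lborel"
      using borel_measurable_times[OF m2 m1] by (rule measurable_cong[THEN iffD1, rotated]) (simp only: mult.left_commute)
    have mb: "(\<lambda>z. indicator {0<..<N} z * (hM M z * gin z)) \<in> borel_measurable lborel"
      using borel_measurable_times[OF borel_measurable_indicator[OF Is] borel_measurable_times[OF m2 ginm]] .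
    have "\<Phi> M 0 = integral\<^sup>L lborel (\<lambda>z. indicator {0<..<N} z * (hM M z * g z 0))"
      unfolding \<Phi>_def set_lebesgue_integral_def by (simp only: real_scaleR_def)
    also have "\<dots> = integral\<^sup>L lborel (\<lambda>z. indicator {0<..<N} z * (hM M z * gin z))"
    proof (rule integral_cong_AE[OF ma mb])
      show "AE z in lborel. indicator {0<..<N} z * (hM M z * g z 0) = indicator {0<..<N} z * (hM M z * gin z)"
        using gin0 by (rule eventually_mono) (auto simp: indicator_def)
    qed
    also have "\<dots> \<le> integral\<^sup>L lborel (\<lambda>z. indicator {0<..} z * ((z powr (-2 * \<beta>) + z) * gin z))"
    proof (rule integral_mono)
      have pt: "\<And>z. 0 \<le> indicator {0<..<N} z * (hM M z * gin z) \<and> indicator {0<..<N} z * (hM M z * gin z) \<le> indicator {0<..} z * ((z powr (-2 * \<beta>) + z) * gin z)"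
      proof -
        fix z
        show "0 \<le> indicator {0<..<N} z * (hM M z * gin z) \<and> indicator {0<..<N} z * (hM M z * gin z) \<le> indicator {0<..} z * ((z powr (-2 * \<beta>) + z) * gin z)"
        proof (cases "z \<in> {0<..<N}")
          case True
          then have zp: "z > 0" by simp
          have g0: "gin z \<ge> 0" using assms(3) zp by blast
          have "hM M z * gin z \<le> (z powr (-2 * \<beta>) + z) * gin z"
            by (rule mult_right_mono[OF hle[OF True] g0])
          then show ?thesis using True zp g0 hpos[of M z] by (simp add: indicator_def)
        next
          case False
          show ?thesis
          proof (cases "z > 0")
            case True
            have g0: "gin z \<ge> 0" using assms(3) True by blast
            have "0 \<le> (z powr (-2 * \<beta>) + z) * gin z" using True g0 by simp
            then show ?thesis using False True by (simp add: indicator_def)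
          qed (use False in \<open>simp add: indicator_def\<close>)
        qed
      qed
      show "integrable lborel (\<lambda>z. indicator {0<..} z * ((z powr (-2 * \<beta>) + z) * gin z))" by (rule iR)
      show "integrable lborel (\<lambda>z. indicator {0<..<N} z * (hM M z * gin z))"
      proof (rule Bochner_Integration.integrable_bound[OF iR mb])
        show "AE z in lborel. norm (indicator {0<..<N} z * (hM M z * gin z)) \<le> norm (indicator {0<..} z * ((z powr (-2 * \<beta>) + z) * gin z))"
          using pt by (intro AE_I2) (metis abs_of_nonneg order_trans real_norm_def)
      qed
      fix z show "indicator {0<..<N} z * (hM M z * gin z) \<le> indicator {0<..} z * ((z powr (-2 * \<beta>) + z) * gin z)"
        using pt by blast
    qed
    also have "\<dots> = R" unfolding R_def set_lebesgue_integral_def by (simp only: real_scaleR_def)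
    finally show "\<Phi> M 0 \<le> R" .
  qed
  define f where "f = (\<lambda>M z. ennreal (indicator {0<..<N} z * (hM M z * g z t)))"
  have t0: "0 \<le> t" by (rule assms(8))
  have mgt: "gs t \<in> borel_measurable lborel" using gsm[OF t0] by (simp only: measurable_lborel2)
  have fm: "\<And>M. f M \<in> borel_measurable lborel"
  proof -
    fix M
    have m2: "hM M \<in> borel_measurable lborel" using hm[of M] by (simp only: measurable_lborel2)
    have "(\<lambda>z. hM M z * gs t z) \<in> borel_measurable lborel" by (rule borel_measurable_times[OF m2 mgt])
    then have "(\<lambda>z. ennreal (hM M z * gs t z)) \<in> borel_measurable lborel" by (rule measurable_compose[OF _ measurable_ennreal])
    then show "f M \<in> borel_measurable lborel" unfolding f_def gs_def
      by (rule measurable_cong[THEN iffD1, rotated]) (simp only: mult.left_commute)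
  qed
  have finc: "incseq f"
  proof (rule incseq_SucI, rule le_funI)
    fix M z
    have "hM M z \<le> hM (Suc M) z" unfolding hM_def by (simp add: min.coboundedI1 min_def)
    moreover have "0 \<le> indicator {0<..<N} z * g z t"
      using gpos0[OF t0, of z] by (simp add: indicator_def)
    ultimately have le1: "(indicator {0<..<N} z * g z t) * hM M z \<le> (indicator {0<..<N} z * g z t) * hM (Suc M) z"
      by (rule mult_left_mono)
    have eqK: "\<And>K. indicator {0<..<N} z * (hM K z * g z t) = (indicator {0<..<N} z * g z t) * hM K z"
      by (simp only: mult_ac)
    have "indicator {0<..<N} z * (hM M z * g z t) \<le> indicator {0<..<N} z * (hM (Suc M) z * g z t)"
      unfolding eqK by (rule le1)
    then show "f M z \<le> f (Suc M) z" unfolding f_def by (rule ennreal_leI)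
  qed
  have fval: "\<And>M. (\<integral>\<^sup>+z. f M z \<partial>lborel) = ennreal (\<Phi> M t)"
  proof -
    fix M
    have m2: "hM M \<in> borel_measurable lborel" using hm[of M] by (simp only: measurable_lborel2)
    have i: "integrable lborel (\<lambda>z. indicator {0<..<N} z * (hM M z * g z t))"
    proof (rule Bochner_Integration.integrable_bound[where f="\<lambda>z. (real M + N) * gs t z"])
      show "integrable lborel (\<lambda>z. (real M + N) * gs t z)" using gsi[OF t0] by simp
      have "(\<lambda>z. hM M z * gs t z) \<in> borel_measurable lborel" by (rule borel_measurable_times[OF m2 mgt])
      then show "(\<lambda>z. indicator {0<..<N} z * (hM M z * g z t)) \<in> borel_measurable lborel" unfolding gs_def
        by (rule measurable_cong[THEN iffD1, rotated]) (simp only: mult.left_commute)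
      show "AE z in lborel. norm (indicator {0<..<N} z * (hM M z * g z t)) \<le> norm ((real M + N) * gs t z)"
      proof (rule AE_I2)
        fix z
        show "norm (indicator {0<..<N} z * (hM M z * g z t)) \<le> norm ((real M + N) * gs t z)"
        proof (cases "z \<in> {0<..<N}")
          case True
          have g0: "0 \<le> g z t" using gpos0[OF t0 True] .
          have "hM M z * g z t \<le> (real M + N) * g z t" by (rule mult_right_mono[OF hb[OF True] g0])
          then show ?thesis using True g0 hpos[of M z] unfolding gs_def by (simp add: indicator_def)
        qed (auto simp: indicator_def)
      qed
    qed
    have "(\<integral>\<^sup>+z. f M z \<partial>lborel) = ennreal (integral\<^sup>L lborel (\<lambda>z. indicator {0<..<N} z * (hM M z * g z t)))"
      unfolding f_def
    proof (rule nn_integral_eq_integral[OF i])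
      show "AE z in lborel. 0 \<le> indicator {0<..<N} z * (hM M z * g z t)"
        by (rule AE_I2) (use gpos0[OF t0] hpos in \<open>simp add: indicator_def\<close>)
    qed
    also have "integral\<^sup>L lborel (\<lambda>z. indicator {0<..<N} z * (hM M z * g z t)) = \<Phi> M t"
      unfolding \<Phi>_def set_lebesgue_integral_def by (simp only: real_scaleR_def)
    finally show "(\<integral>\<^sup>+z. f M z \<partial>lborel) = ennreal (\<Phi> M t)" .
  qed
  have pw: "\<And>z. ennreal ((z + z powr (-2 * \<beta>)) * g z t) * indicator {0<..<N} z = (SUP M. f M z)"
  proof -
    fix z
    show "ennreal ((z + z powr (-2 * \<beta>)) * g z t) * indicator {0<..<N} z = (SUP M. f M z)"
    proof (cases "z \<in> {0<..<N}")
      case False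
      then show ?thesis unfolding f_def by simp
    next
      case True
      have g0: "0 \<le> g z t" using gpos0[OF t0 True] .
      have fz: "\<And>M. f M z = ennreal (hM M z * g z t)" unfolding f_def using True by simp
      have le: "(SUP M. f M z) \<le> ennreal ((z + z powr (-2 * \<beta>)) * g z t)"
      proof (rule SUP_least)
        fix M
        have "hM M z * g z t \<le> (z + z powr (-2 * \<beta>)) * g z t"
          using mult_right_mono[OF hle[OF True] g0] by (simp add: add.commute)
        then show "f M z \<le> ennreal ((z + z powr (-2 * \<beta>)) * g z t)" unfolding fz by (rule ennreal_leI)
      qed
      obtain M :: nat where M: "z powr (-2 * \<beta>) \<le> real M" using real_arch_simple by blast
      have "hM M z = z + z powr (-2 * \<beta>)" unfolding hM_def using True M by auto
      then have "ennreal ((z + z powr (-2 * \<beta>)) * g z t) = f M z" unfolding fz by simp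
      also have "\<dots> \<le> (SUP M. f M z)" by (rule SUP_upper) simp
      finally have ge: "ennreal ((z + z powr (-2 * \<beta>)) * g z t) \<le> (SUP M. f M z)" .
      show ?thesis using le ge True by simp
    qed
  qed
  have "(\<integral>\<^sup>+ z\<in>{0<..<N}. ennreal ((z + z powr (-2 * \<beta>)) * g z t) \<partial>lborel) = (\<integral>\<^sup>+z. (SUP M. f M z) \<partial>lborel)"
    by (rule nn_integral_cong) (rule pw)
  also have "\<dots> = (SUP M. \<integral>\<^sup>+z. f M z \<partial>lborel)"
    by (rule nn_integral_monotone_convergence_SUP[OF finc fm])
  also have "\<dots> \<le> ennreal R"
  proof (rule SUP_least)
    fix M
    have "\<Phi> M t \<le> R" using decr[of M] ini[of M] by simp
    then show "(\<integral>\<^sup>+z. f M z \<partial>lborel) \<le> ennreal R" unfolding fval by (rule ennreal_leI)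
  qed
  finally show ?thesis unfolding N_def R_def .
qed
end
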